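(* Let $m\geq 0$ and $n>1$. There is an injection from $P_3(-m+1,n)$ to $Q_3(m,n)$.
   Context: Partitions are identified with their $m$-Durfee rectangle symbols, defined as follows. - For a partition $\lambda$ of $n$ with $\ell(\lambda)>m$ parts, let $j\geq1$ be the largest integer with $\lambda_{m+j}\geq j$. Let $\alpha$ be the partition whose $i$-th part is the number of $k\leq m+j$ with $\lambda_k\geq j+i$ (the columns right of the $(m+j)\times j$ rectangle). Let $\beta=(\lambda_{m+j+1},\lambda_{m+j+2},\ldots)$ (the rows below the rectangle). - If $\ell(\lambda)\leq m$, set $j=0$, $\alpha=\lambda'$ (the conjugate) and $\beta=\emptyset$. The symbol is written $(\alpha,\beta)_{(m+j)\times j}$, with $\ell(\cdot)$ denoting number of parts. The first part of an empty sequence is taken to be $0$. $P(-m+1,n)$ is the set of partitions of $n$ with rank (largest part minus number of parts) at least $-m+1$. $P_3(-m+1,n)$ is the set of those $(\alpha,\beta)_{(m+j)\times j}\in P(-m+1,n)$ with $j\geq2$ and $\beta_1\leq j-2$. The rank-set of $\lambda=(\lambda_1,\ldots,\lambda_\ell)$ is $[-\lambda_1,1-\lambda_2,\ldots,\ell-1-\lambda_\ell,\ell,\ell+1,\ldots]$. $Q(m,n)$ is the set of partitions of $n$ whose rank-set contains $m$. $Q_3(m,n)$ is the set of $(\gamma,\delta)_{(m+j')\times j'}\in Q(m,n)$ with $j'\geq1$, $\ell(\delta)-\ell(\gamma)\geq 0$ and $\gamma_1=m+j'$. *)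

theory Defs
  imports Main
begin

definition is_partition :: "nat list \<Rightarrow> bool" where
  "is_partition xs \<longleftrightarrow> sorted_wrt (\<ge>) xs \<and> (\<forall>x\<in>set xs. 0 < x)"

definition partitions :: "nat \<Rightarrow> nat list set" where
  "partitions n = {xs. is_partition xs \<and> sum_list xs = n}"

text \<open>1-based part lambda_i, with lambda_i = 0 beyond the length
 (in particular, the first part of an empty sequence is 0).\<close>
definition part :: "nat list \<Rightarrow> nat \<Rightarrow> nat" where
  "part xs i = (if 1 \<le> i \<and> i \<le> length xs then xs ! (i - 1) else 0)"

definition conj_part :: "nat list \<Rightarrow> nat list" where
  "conj_part xs = [length (filter (\<lambda>x. i \<le> x) xs). i \<leftarrow> [1..<part xs 1 + 1]]"

text \<open>The m-Durfee rectangle symbol (alpha, beta)_{(m+j) x j}.\<close>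

definition durfee_j :: "nat \<Rightarrow> nat list \<Rightarrow> nat" where
  "durfee_j m xs = (if length xs \<le> m then 0
      else (GREATEST j. 1 \<le> j \<and> j \<le> length xs \<and> j \<le> part xs (m + j)))"

definition durfee_alpha :: "nat \<Rightarrow> nat list \<Rightarrow> nat list" where
  "durfee_alpha m xs = (if length xs \<le> m then conj_part xs
      else (let j = durfee_j m xs in
        filter (\<lambda>c. 0 < c)
          [card {k. 1 \<le> k \<and> k \<le> m + j \<and> j + i \<le> part xs k}. i \<leftarrow> [1..<part xs 1 + 1]]))"

definition durfee_beta :: "nat \<Rightarrow> nat list \<Rightarrow> nat list" where
  "durfee_beta m xs = (if length xs \<le> m then [] else drop (m + durfee_j m xs) xs)"

definition rank :: "nat list \<Rightarrow> int" where
  "rank xs = int (part xs 1) - int (length xs)"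

definition P_set :: "int \<Rightarrow> nat \<Rightarrow> nat list set" where
  "P_set r n = {xs \<in> partitions n. r \<le> rank xs}"

definition P3 :: "nat \<Rightarrow> nat \<Rightarrow> nat list set" where
  "P3 m n = {xs \<in> P_set (- int m + 1) n.
      2 \<le> durfee_j m xs \<and> int (part (durfee_beta m xs) 1) \<le> int (durfee_j m xs) - 2}"

definition rank_set :: "nat list \<Rightarrow> int set" where
  "rank_set xs = {int i - 1 - int (part xs i) | i. 1 \<le> i \<and> i \<le> length xs}
                 \<union> {k. int (length xs) \<le> k}"

definition Q_set :: "nat \<Rightarrow> nat \<Rightarrow> nat list set" where
  "Q_set m n = {xs \<in> partitions n. int m \<in> rank_set xs}"

definition Q3 :: "nat \<Rightarrow> nat \<Rightarrow> nat list set" where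
  "Q3 m n = {xs \<in> Q_set m n.
      1 \<le> durfee_j m xs \<and>
      int (length (durfee_beta m xs)) - int (length (durfee_alpha m xs)) \<ge> 0 \<and>
      part (durfee_alpha m xs) 1 = m + durfee_j m xs}"

end

theory Submission
  imports Defs
begin

lemma part_mono:
  assumes "is_partition xs" "1 \<le> a" "a \<le> b"
  shows "part xs b \<le> part xs a"
proof -
  have s: "sorted_wrt (\<ge>) xs" using assms(1) by (simp add: is_partition_def)
  show ?thesis
  proof (cases "b \<le> length xs")
    case True
    show ?thesis
    proof (cases "a = b")
      case False
      then have "a - 1 < b - 1" using assms by simp
      then have "xs ! (b - 1) \<le> xs ! (a - 1)"
        using s True assms unfolding sorted_wrt_iff_nth_less by auto
      then show ?thesis using True assms by (simp add: part_def)
    qed simp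
  next
    case False
    then show ?thesis by (simp add: part_def)
  qed
qed

lemma P3_facts:
  assumes "xs \<in> P3 m n"
  obtains x ys j where "xs = x # ys" "j = durfee_j m xs" "2 \<le> j" "m + j \<le> length xs"
    "j \<le> xs ! (m+j-1)" "\<forall>y\<in>set (drop (m+j-1) ys). y + 2 \<le> j"
    "j + length (drop (m+j-1) ys) + 1 \<le> x" "is_partition xs" "sum_list xs = n"
proof -
  define j where "j = durfee_j m xs"
  have ip: "is_partition xs" and sn: "sum_list xs = n"
    and rk: "- int m + 1 \<le> rank xs" and j2: "2 \<le> j"
    and bt: "int (part (durfee_beta m xs) 1) \<le> int j - 2"
    using assms by (auto simp: P3_def P_set_def partitions_def j_def)
  have s: "sorted_wrt (\<ge>) xs" and pos: "\<forall>x\<in>set xs. 0 < x"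
    using ip by (auto simp: is_partition_def)
  have len: "m < length xs"
  proof (rule ccontr)
    assume "\<not> m < length xs"
    then have "j = 0" by (simp add: j_def durfee_j_def)
    then show False using j2 by simp
  qed
  define P where "P = (\<lambda>j. 1 \<le> j \<and> j \<le> length xs \<and> j \<le> part xs (m + j))"
  have dj: "j = Greatest P" using len by (simp add: j_def durfee_j_def P_def)
  have "xs ! m \<in> set xs" using len by simp
  then have "0 < xs ! m" using pos by blast
  then have "P 1" using len by (auto simp: P_def part_def)
  then have "P j" unfolding dj by (rule GreatestI_nat[of P 1 "length xs"]) (simp add: P_def)
  then have jle: "j \<le> part xs (m + j)" by (simp add: P_def)
  then have mj: "m + j \<le> length xs" using j2 by (auto simp: part_def split: if_splits)
  have jnth: "j \<le> xs ! (m+j-1)" using jle mj j2 by (simp add: part_def)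
  obtain x ys where xs: "xs = x # ys" using len by (cases xs) auto
  define \<beta> where "\<beta> = drop (m+j-1) ys"
  have b1: "durfee_beta m xs = drop (m+j) xs"
    using len by (simp add: durfee_beta_def j_def)
  have "m + j = Suc (m + j - 1)" using j2 by simp
  then have "drop (m+j) xs = \<beta>" unfolding \<beta>_def xs by (metis drop_Suc_Cons)
  then have beq: "durfee_beta m xs = \<beta>" using b1 by simp
  have sb: "sorted_wrt (\<ge>) \<beta>" using s by (simp add: \<beta>_def xs sorted_wrt_drop)
  have bb: "\<forall>y\<in>set \<beta>. y + 2 \<le> j"
  proof
    fix y assume y: "y \<in> set \<beta>"
    then obtain b0 bs where b: "\<beta> = b0 # bs" by (cases \<beta>) auto
    have "y \<le> b0" using y sb b by auto
    moreover have "int b0 \<le> int j - 2" using bt beq b by (simp add: part_def)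
    ultimately show "y + 2 \<le> j" by linarith
  qed
  have lb: "length \<beta> = length ys - (m + j - 1)" by (simp add: \<beta>_def)
  have "j + length \<beta> + 1 \<le> x"
    using rk mj lb j2 by (simp add: rank_def part_def xs)
  then show ?thesis
    using that[OF xs j_def j2 mj jnth _ _ ip sn] bb by (simp add: \<beta>_def)
qed

definition fmap :: "nat \<Rightarrow> nat list \<Rightarrow> nat list" where
  "fmap m xs = (case xs of [] \<Rightarrow> [] | x # ys \<Rightarrow>
     (let j = durfee_j m xs; i = m + j - 1; b = drop i ys in
       take i ys @ [j - 1] @ map Suc b @ replicate (x + 1 - j - length b) 1))"

definition ginv :: "nat \<Rightarrow> nat list \<Rightarrow> nat list" where
  "ginv m mu = (let i = m + durfee_j m mu in
     (length mu - m - 1) # take i mu @ map (\<lambda>x. x - 1) (takeWhile (\<lambda>x. 2 \<le> x) (drop (Suc i) mu)))"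

lemma length_filter_mono':
  "(\<And>x. P x \<Longrightarrow> Q x) \<Longrightarrow> length (filter P xs) \<le> length (filter Q xs)"
  by (induct xs) auto

lemma len_filter_upt:
  "length (filter (\<lambda>t. t \<le> c) [1..<N]) \<le> c"
proof -
  have "length (filter (\<lambda>t. t \<le> c) [1..<N]) = card (set (filter (\<lambda>t. t \<le> c) [1..<N]))"
    by (metis distinct_card distinct_filter distinct_upt)
  also have "\<dots> \<le> card {1..c}" by (rule card_mono) auto
  finally show ?thesis by simp
qed

lemma main:
  assumes "xs \<in> P3 m n"
  shows "fmap m xs \<in> Q3 m n \<and> ginv m (fmap m xs) = xs"
proof -
  obtain x ys j where xs: "xs = x # ys" and jd: "j = durfee_j m xs" and j2: "2 \<le> j"
    and mj: "m + j \<le> length xs" and jn: "j \<le> xs ! (m+j-1)"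
    and bb: "\<forall>y\<in>set (drop (m+j-1) ys). y + 2 \<le> j"
    and bx: "j + length (drop (m+j-1) ys) + 1 \<le> x"
    and ip: "is_partition xs" and sn: "sum_list xs = n"
    using P3_facts[OF assms] by blast
  define i where "i = m + j - 1"
  define \<beta> where "\<beta> = drop i ys"
  define k where "k = x + 1 - j - length \<beta>"
  define A where "A = take i ys"
  define T where "T = [j - 1] @ map Suc \<beta> @ replicate k 1"
  define \<mu> where "\<mu> = A @ T"
  have s: "sorted_wrt (\<ge>) xs" and pos: "\<forall>y\<in>set xs. 0 < y"
    using ip by (auto simp: is_partition_def)
  have fm: "fmap m xs = \<mu>"
    by (simp add: fmap_def Let_def xs jd i_def \<beta>_def k_def A_def T_def \<mu>_def)
  have i1: "1 \<le> i" and ij: "i = m + j - 1" and ily: "i \<le> length ys"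
    using j2 mj xs by (auto simp: i_def)
  have lenA: "length A = i" using ily by (simp add: A_def)
  have bb': "\<forall>y\<in>set \<beta>. y + 2 \<le> j" using bb by (simp add: \<beta>_def i_def)
  have bpos: "\<forall>y\<in>set \<beta>. 0 < y" using pos xs by (auto simp: \<beta>_def dest: in_set_dropD)
  have k2: "2 \<le> k" using bx by (simp add: k_def \<beta>_def i_def)
  have lenT: "length T = 1 + length \<beta> + k" by (simp add: T_def)
  have lb: "length \<beta> = length ys - i" by (simp add: \<beta>_def)
  have lenmu: "length \<mu> = m + x + 1"
    using lenA lenT lb ily k2 bx j2 by (simp add: \<mu>_def k_def i_def)
  have Anth: "A ! t = xs ! Suc t" if "t < i" for t
    using that by (simp add: A_def xs)
  have xsge: "j \<le> xs ! t" if "t \<le> i" for t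
  proof (cases "t = i")
    case True then show ?thesis using jn by (simp add: i_def)
  next
    case False
    then have "t < m + j - 1" "m + j - 1 < length xs" using that mj j2 by (auto simp: i_def)
    then have "xs ! (m+j-1) \<le> xs ! t" using s unfolding sorted_wrt_iff_nth_less by blast
    then show ?thesis using jn by simp
  qed
  have Age: "\<forall>y\<in>set A. j \<le> y"
  proof
    fix y assume "y \<in> set A"
    then obtain t where "t < length A" "y = A ! t" by (auto simp: in_set_conv_nth)
    then show "j \<le> y" using Anth xsge lenA by simp
  qed
  have Tle: "\<forall>y\<in>set T. 0 < y \<and> y + 1 \<le> j" using bb' j2 by (auto simp: T_def)
  have sA: "sorted_wrt (\<ge>) A" using s by (simp add: A_def xs sorted_wrt_take)
  have sbeta: "sorted_wrt (\<ge>) \<beta>" using s by (simp add: \<beta>_def xs sorted_wrt_drop)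
  have srep: "sorted_wrt (\<ge>) (replicate k (1::nat))" by (induct k) auto
  have sT: "sorted_wrt (\<ge>) T"
    using bb' bpos j2 sbeta srep
    by (auto simp: T_def sorted_wrt_append sorted_wrt_map)
  have ipm: "is_partition \<mu>"
  proof -
    have c: "\<forall>a\<in>set A. \<forall>b\<in>set T. b \<le> a"
    proof (intro ballI)
      fix a b assume "a \<in> set A" "b \<in> set T"
      then have "j \<le> a" "b + 1 \<le> j" using Age Tle by auto
      then show "b \<le> a" by simp
    qed
    have "\<forall>y\<in>set \<mu>. 0 < y"
    proof
      fix y assume "y \<in> set \<mu>"
      then have "y \<in> set A \<or> y \<in> set T" by (simp add: \<mu>_def)
      then show "0 < y" using Age Tle j2 by (metis le_trans not_gr0 not_numeral_le_zero)
    qed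
    then show ?thesis unfolding is_partition_def \<mu>_def
      using sA sT c by (simp add: sorted_wrt_append)
  qed
  have srp: "sum_list (replicate k (Suc 0)) = k" by (induct k) auto
  have "sum_list \<mu> = sum_list A + (j - 1) + sum_list \<beta> + length \<beta> + k"
    by (simp add: \<mu>_def T_def sum_list_Suc srp)
  also have "\<dots> = x + sum_list ys"
  proof -
    have "sum_list A + sum_list \<beta> = sum_list ys"
      by (simp add: A_def \<beta>_def flip: sum_list_append)
    then show ?thesis using bx j2 by (simp add: k_def \<beta>_def i_def)
  qed
  finally have snm: "sum_list \<mu> = n" using sn xs by simp
  have pmu: "part \<mu> t = part xs (t + 1)" if "1 \<le> t" "t \<le> i" for t
  proof -
    have "t - 1 < i" using that by simp
    then have "\<mu> ! (t - 1) = ys ! (t - 1)" using lenA by (simp add: \<mu>_def nth_append A_def)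
    moreover have "xs ! t = ys ! (t - 1)" using that xs by (cases t) auto
    moreover have "i \<le> length \<mu>" using lenA by (simp add: \<mu>_def)
    ultimately show ?thesis using that lenA ily xs by (simp add: part_def)
  qed
  have pmui: "part \<mu> (i+1) = j - 1"
    using lenA lenmu ily k2 bx j2 by (simp add: part_def \<mu>_def nth_append T_def)
  have rs: "int m \<in> rank_set \<mu>"
  proof -
    have "int m = int (i+1) - 1 - int (part \<mu> (i+1))" using pmui j2 by (simp add: i_def)
    moreover have "i + 1 \<le> length \<mu>" using lenmu i1 bx j2 by (simp add: i_def)
    ultimately have "\<exists>q. int m = int q - 1 - int (part \<mu> q) \<and> 1 \<le> q \<and> q \<le> length \<mu>"
      by (intro exI[of _ "i+1"]) simp
    then show ?thesis unfolding rank_set_def by blast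
  qed
  define Q where "Q = (\<lambda>j. 1 \<le> j \<and> j \<le> length \<mu> \<and> j \<le> part \<mu> (m + j))"
  have Qj: "Q (j - 1)"
  proof -
    have "part \<mu> (m + (j-1)) = part xs (m + j)" using pmu[of "m + (j-1)"] i1 j2 by (simp add: i_def)
    moreover have "part xs (m + j) = xs ! (m + j - 1)" using mj j2 by (simp add: part_def)
    ultimately have "j - 1 \<le> part \<mu> (m + (j-1))" using jn by simp
    moreover have "j - 1 \<le> length \<mu>" using lenmu bx by simp
    ultimately show ?thesis using j2 unfolding Q_def by simp
  qed
  have Qmax: "y \<le> j - 1" if "Q y" for y
  proof (rule ccontr)
    assume "\<not> y \<le> j - 1"
    then have "i + 1 \<le> m + y" using j2 by (simp add: i_def)
    then have "part \<mu> (m + y) \<le> part \<mu> (i+1)" using part_mono[OF ipm] by simp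
    then show False using that pmui \<open>\<not> y \<le> j - 1\<close> by (simp add: Q_def)
  qed
  have djm: "durfee_j m \<mu> = j - 1"
    using lenmu Greatest_equality[of Q "j-1", OF Qj Qmax]
    by (simp add: durfee_j_def Q_def)
  have mij: "m + (j - 1) = i" using j2 by (simp add: i_def)
  have dbm: "durfee_beta m \<mu> = T"
    using lenmu djm mij lenA by (simp add: durfee_beta_def \<mu>_def)
  define N where "N = part \<mu> 1"
  define f where "f = (\<lambda>t. card {k. 1 \<le> k \<and> k \<le> m + (j-1) \<and> (j-1) + t \<le> part \<mu> k})"
  have dam: "durfee_alpha m \<mu> = filter (\<lambda>c. 0 < c) (map f [1..<N + 1])"
    using lenmu djm by (simp add: durfee_alpha_def f_def N_def Let_def)
  have Nx: "N \<le> x"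
  proof -
    have "N = part xs 2" using pmu[of 1] i1 by (simp add: N_def numeral_2_eq_2)
    also have "\<dots> \<le> part xs 1" by (rule part_mono[OF ip]) auto
    finally show ?thesis by (simp add: part_def xs)
  qed
  have Nj: "j \<le> N"
  proof -
    have "N = xs ! 1" using pmu[of 1] i1 ily xs by (simp add: N_def part_def)
    then show ?thesis using xsge[of 1] i1 by simp
  qed
  have fpos: "t \<le> N + 1 - j" if "0 < f t" for t
  proof -
    have "{k. 1 \<le> k \<and> k \<le> m + (j-1) \<and> (j-1) + t \<le> part \<mu> k} \<noteq> {}"
      using that unfolding f_def by (metis card.empty less_irrefl)
    then obtain q where q: "1 \<le> q" "(j-1) + t \<le> part \<mu> q" by auto
    have "part \<mu> q \<le> N" unfolding N_def by (rule part_mono[OF ipm]) (use q in auto)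
    then show ?thesis using q j2 by simp
  qed
  have lal: "length (durfee_alpha m \<mu>) \<le> length T"
  proof -
    have "length (durfee_alpha m \<mu>) = length (filter (\<lambda>t. 0 < f t) [1..<N+1])"
      by (simp add: dam filter_map comp_def del: upt_Suc)
    also have "\<dots> \<le> length (filter (\<lambda>t. t \<le> N + 1 - j) [1..<N+1])"
      by (rule length_filter_mono') (use fpos in auto)
    also have "\<dots> \<le> N + 1 - j" by (rule len_filter_upt)
    also have "\<dots> \<le> length T" using lenT Nx j2 bx by (simp add: k_def)
    finally show ?thesis .
  qed
  have f1: "f 1 = i"
  proof -
    have "{k. 1 \<le> k \<and> k \<le> m + (j-1) \<and> (j-1) + 1 \<le> part \<mu> k} = {1..i}"
    proof (intro set_eqI iffI)
      fix q assume "q \<in> {1..i}"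
      then have "1 \<le> q" "q \<le> i" by auto
      then have "part \<mu> q = xs ! q" using pmu[of q] ily xs by (simp add: part_def)
      then show "q \<in> {k. 1 \<le> k \<and> k \<le> m + (j-1) \<and> (j-1) + 1 \<le> part \<mu> k}"
        using xsge[of q] \<open>1 \<le> q\<close> \<open>q \<le> i\<close> j2 mij by simp
    qed (use mij in auto)
    then show ?thesis by (simp add: f_def)
  qed
  have upt1: "[1..<N+1] = 1 # [Suc 1..<N+1]" by (rule upt_conv_Cons) (use Nj j2 in simp)
  have "durfee_alpha m \<mu> = filter (\<lambda>c. 0 < c) (f 1 # map f [Suc 1..<N+1])"
    by (simp only: dam upt1 list.map)
  then obtain rest where "durfee_alpha m \<mu> = i # rest" using f1 i1 by simp
  then have pa: "part (durfee_alpha m \<mu>) 1 = m + durfee_j m \<mu>"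
    using mij djm by (simp add: part_def)
  have Q3m: "\<mu> \<in> Q3 m n"
    unfolding Q3_def Q_set_def partitions_def
    using ipm snm rs djm j2 dbm lal pa by simp
  have dr: "drop (Suc i) \<mu> = map Suc \<beta> @ replicate k 1"
    using lenA by (simp add: \<mu>_def T_def)
  have tw: "takeWhile (\<lambda>x. 2 \<le> x) (drop (Suc i) \<mu>) = map Suc \<beta>"
  proof -
    obtain k' where "k = Suc k'" using k2 by (cases k) auto
    then show ?thesis unfolding dr using bpos by (subst takeWhile_append2) auto
  qed
  have "ginv m \<mu> = x # ys"
    using lenmu djm mij lenA tw by (simp add: ginv_def \<mu>_def A_def \<beta>_def comp_def)
  then show ?thesis using Q3m fm xs by simp
qed

theorem lemma2p6:
  fixes m n :: nat
  assumes "1 < n"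
  shows "\<exists>f. inj_on f (P3 m n) \<and> f ` P3 m n \<subseteq> Q3 m n"
proof (intro exI conjI)
  show "inj_on (fmap m) (P3 m n)"
    by (rule inj_on_inverseI[where g = "ginv m"]) (use main in blast)
  show "fmap m ` P3 m n \<subseteq> Q3 m n" using main by blast
qed

end
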